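(* Let $U$ be a finite universe, let $\mathbf{B} = (\mathbf{B}_1, \mathbf{B}_2)$ be any Bloom filter, and fix $p \in (\tfrac12, 1)$. The Warner filter built from $\mathbf{B}$ — whose construction algorithm $\mathbf{B}_1'$, on input $S \subseteq U$, initializes $S' \gets \emptyset$, adds each $x \in S$ to $S'$ independently with probability $p$, adds each $x \in U \setminus S$ to $S'$ independently with probability $1-p$, and returns $\mathbf{B}_1(S')$ (the query algorithm $\mathbf{B}_2$ being unchanged) — satisfies $\left(\ln\frac{p}{1-p},\ 0\right)$-differential privacy, i.e. the randomized algorithm $\mathbf{B}_1'$ mapping sets to representations satisfies this differential privacy guarantee.
   Context: A Bloom filter is a pair $\mathbf{B}=(\mathbf{B}_1,\mathbf{B}_2)$ of probabilistic polynomial-time algorithms: $\mathbf{B}_1$ takes a set $S \subseteq U$ and returns a representation $M$; $\mathbf{B}_2$ takes a representation $M$ and an element $x \in U$ and outputs a bit. For sets $A,B$, let $d_{sj}(A,B) = |A \cup B| - |A \cap B|$. A randomized algorithm $\mathbf{A}_r$ taking subsets of $U$ as input satisfies $(\epsilon,\delta)$-differential privacy if for any two sets $S,S'$ with $d_{sj}(S,S') \le 1$ and any output range $O \subseteq \mathrm{Range}(\mathbf{A}_r)$, $\Pr[\mathbf{A}_r(S) \in O] \le e^{\epsilon}\Pr[\mathbf{A}_r(S') \in O] + \delta$, probabilities over the randomness of $\mathbf{A}_r$. *)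

theory Defs
  imports "HOL-Probability.Probability"
begin

definition d_sj :: "'a set \<Rightarrow> 'a set \<Rightarrow> int" where
  "d_sj A B = int (card (A \<union> B)) - int (card (A \<inter> B))"

text \<open>Every set of outputs is an event of a pmf.\<close>
definition differentially_private ::
  "'a set \<Rightarrow> ('a set \<Rightarrow> 'm pmf) \<Rightarrow> real \<Rightarrow> real \<Rightarrow> bool" where
  "differentially_private U A eps delta \<longleftrightarrow>
     (\<forall>S S' Out. S \<subseteq> U \<longrightarrow> S' \<subseteq> U \<longrightarrow> d_sj S S' \<le> 1 \<longrightarrow>
        measure_pmf.prob (A S) Out \<le> exp eps * measure_pmf.prob (A S') Out + delta)"

definition warner_set :: "'a set \<Rightarrow> real \<Rightarrow> 'a set \<Rightarrow> 'a set pmf" where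
  "warner_set U p S =
     map_pmf (\<lambda>f. {x \<in> U. f x})
       (Pi_pmf U False (\<lambda>x. bernoulli_pmf (if x \<in> S then p else 1 - p)))"

definition warner_B1 :: "'a set \<Rightarrow> real \<Rightarrow> ('a set \<Rightarrow> 'm pmf) \<Rightarrow> 'a set \<Rightarrow> 'm pmf" where
  "warner_B1 U p B1 S = bind_pmf (warner_set U p S) B1"

end

theory Submission
  imports Defs
begin

lemma dom_bind:
  fixes c :: real
  assumes "\<And>x. pmf X x \<le> c * pmf Y x" "c \<ge> 0"
  shows "measure_pmf.prob (bind_pmf X f) A \<le> c * measure_pmf.prob (bind_pmf Y f) A"
proof -
  have "emeasure (measure_pmf (bind_pmf X f)) A = (\<integral>\<^sup>+x. emeasure (f x) A \<partial>X)" by simp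
  also have "\<dots> = \<integral>\<^sup>+ x. ennreal (pmf X x) * emeasure (f x) A \<partial>count_space UNIV"
    by (rule nn_integral_measure_pmf)
  also have "\<dots> \<le> \<integral>\<^sup>+ x. ennreal c * (ennreal (pmf Y x) * emeasure (f x) A) \<partial>count_space UNIV"
  proof (rule nn_integral_mono)
    fix x
    have "ennreal (pmf X x) \<le> ennreal c * ennreal (pmf Y x)"
      using assms by (simp add: ennreal_mult[symmetric])
    then show "ennreal (pmf X x) * emeasure (f x) A \<le> ennreal c * (ennreal (pmf Y x) * emeasure (f x) A)"
      by (metis mult.assoc mult_right_mono zero_le)
  qed
  also have "\<dots> = ennreal c * \<integral>\<^sup>+ x. ennreal (pmf Y x) * emeasure (f x) A \<partial>count_space UNIV"
    by (rule nn_integral_cmult) simp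
  also have "\<dots> = ennreal c * emeasure (measure_pmf (bind_pmf Y f)) A"
    by (simp add: nn_integral_measure_pmf)
  finally have "ennreal (measure_pmf.prob (bind_pmf X f) A) \<le> ennreal (c * measure_pmf.prob (bind_pmf Y f) A)"
    using assms(2) by (simp add: measure_pmf.emeasure_eq_measure ennreal_mult)
  then show ?thesis using assms(2) by (simp add: ennreal_le_iff)
qed

lemma prod_dom:
  fixes a b :: "'a \<Rightarrow> real"
  assumes "finite U" "\<And>x. x \<noteq> z \<Longrightarrow> a x = b x" "a z \<le> c * b z" "c \<ge> 1"
    "\<And>x. a x \<ge> 0" "\<And>x. b x \<ge> 0"
  shows "(\<Prod>x\<in>U. a x) \<le> c * (\<Prod>x\<in>U. b x)"
proof (cases "z \<in> U")
  case True
  have eq: "(\<Prod>x\<in>U-{z}. a x) = (\<Prod>x\<in>U-{z}. b x)"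
    by (rule prod.cong[OF refl]) (simp add: assms(2))
  have nn: "(\<Prod>x\<in>U-{z}. b x) \<ge> 0" by (rule prod_nonneg) (simp add: assms(6))
  have "(\<Prod>x\<in>U. a x) = a z * (\<Prod>x\<in>U-{z}. a x)" using True assms(1) by (simp add: prod.remove)
  also have "\<dots> = a z * (\<Prod>x\<in>U-{z}. b x)" by (simp only: eq)
  also have "\<dots> \<le> (c * b z) * (\<Prod>x\<in>U-{z}. b x)"
    by (rule mult_right_mono[OF assms(3) nn])
  also have "\<dots> = c * (b z * (\<Prod>x\<in>U-{z}. b x))" by (simp only: mult.assoc)
  also have "b z * (\<Prod>x\<in>U-{z}. b x) = (\<Prod>x\<in>U. b x)" using True assms(1) by (simp add: prod.remove)
  finally show ?thesis .
next
  case False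
  have eq: "(\<Prod>x\<in>U. a x) = (\<Prod>x\<in>U. b x)"
  proof (rule prod.cong[OF refl])
    fix x assume "x \<in> U" then have "x \<noteq> z" using False by blast
    then show "a x = b x" by (rule assms(2))
  qed
  have nn: "(\<Prod>x\<in>U. b x) \<ge> 0" by (rule prod_nonneg) (simp add: assms(6))
  have "(\<Prod>x\<in>U. b x) * 1 \<le> (\<Prod>x\<in>U. b x) * c" by (rule mult_left_mono[OF assms(4) nn])
  then show ?thesis using eq by (simp add: mult.commute)
qed

theorem mainTheorem3:
  fixes U :: "'a set" and B1 :: "'a set \<Rightarrow> 'm pmf"
    and p :: real
  assumes "finite U"
    and "1/2 < p" and "p < 1"
  shows "differentially_private U (warner_B1 U p B1) (ln (p / (1 - p))) 0"
  unfolding differentially_private_def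
proof (intro allI impI)
  fix S S' :: "'a set" and Out :: "'m set"
  assume SU: "S \<subseteq> U" and S'U: "S' \<subseteq> U" and d: "d_sj S S' \<le> 1"
  define c where "c = p / (1 - p)"
  have c1: "c \<ge> 1" using assms unfolding c_def by (simp add: field_simps)
  have ec: "exp (ln (p / (1 - p))) = c" using assms unfolding c_def by simp
  have fin: "finite (S \<union> S')" using SU S'U assms(1) finite_subset by blast
  have "card ((S \<union> S') - (S \<inter> S')) = card (S \<union> S') - card (S \<inter> S')"
    using fin by (intro card_Diff_subset) (auto intro: finite_subset)
  then have "card ((S \<union> S') - (S \<inter> S')) \<le> 1" using d unfolding d_sj_def by linarith
  then obtain z where z: "(S \<union> S') - (S \<inter> S') \<subseteq> {z}"
  proof (cases "card ((S \<union> S') - (S \<inter> S')) = 0")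
    case True
    then have "(S \<union> S') - (S \<inter> S') = {}" using fin by simp
    then show ?thesis using that by blast
  next
    case False
    then have "card ((S \<union> S') - (S \<inter> S')) = 1" using \<open>card _ \<le> 1\<close> by linarith
    then obtain z where "(S \<union> S') - (S \<inter> S') = {z}" by (rule card_1_singletonE)
    then show ?thesis using that by blast
  qed
  have zz: "\<And>x. x \<noteq> z \<Longrightarrow> (x \<in> S) = (x \<in> S')" using z by blast
  define q :: "'a set \<Rightarrow> 'a \<Rightarrow> bool pmf" where "q = (\<lambda>T x. bernoulli_pmf (if x \<in> T then p else 1 - p))"
  have pb: "\<And>T x b. pmf (q T x) b = (if b = (x \<in> T) then p else 1 - p)"
    using assms unfolding q_def by (auto simp: pmf_bernoulli_True pmf_bernoulli_False)
  have W: "\<And>T. warner_B1 U p B1 T = bind_pmf (Pi_pmf U False (q T)) (\<lambda>f. B1 {x \<in> U. f x})"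
    unfolding warner_B1_def warner_set_def q_def by (simp add: map_pmf_def bind_assoc_pmf bind_return_pmf)
  have "\<And>f. pmf (Pi_pmf U False (q S)) f \<le> c * pmf (Pi_pmf U False (q S')) f"
  proof -
    fix f :: "'a \<Rightarrow> bool"
    have "(\<Prod>x\<in>U. pmf (q S x) (f x)) \<le> c * (\<Prod>x\<in>U. pmf (q S' x) (f x))"
    proof (rule prod_dom[OF assms(1) _ _ c1])
      show "\<And>x. x \<noteq> z \<Longrightarrow> pmf (q S x) (f x) = pmf (q S' x) (f x)" using zz pb by simp
      show "pmf (q S z) (f z) \<le> c * pmf (q S' z) (f z)"
      proof (cases "(z \<in> S) = (z \<in> S')")
        case True
        then have "pmf (q S z) (f z) = pmf (q S' z) (f z)" unfolding pb by simp
        moreover have "pmf (q S' z) (f z) \<ge> 0" by simp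
        moreover have "pmf (q S' z) (f z) * 1 \<le> pmf (q S' z) (f z) * c"
          using c1 by (intro mult_left_mono) simp_all
        ultimately show ?thesis by (simp add: mult.commute)
      next
        case False
        have cp: "c * (1 - p) = p" using assms unfolding c_def by simp
        have "c * p \<ge> p" using c1 assms by simp
        show ?thesis
        proof (cases "f z = (z \<in> S)")
          case True
          with False have "f z \<noteq> (z \<in> S')" by blast
          then show ?thesis using True cp unfolding pb by simp
        next
          case F2: False
          with False have "f z = (z \<in> S')" by blast
          moreover have "1 - p \<le> c * p" using \<open>c * p \<ge> p\<close> assms by linarith
          ultimately show ?thesis using F2 unfolding pb by simp
        qed
      qed
    qed auto
    then show "pmf (Pi_pmf U False (q S)) f \<le> c * pmf (Pi_pmf U False (q S')) f"
      using assms(1) by (auto simp: pmf_Pi)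
  qed
  from dom_bind[OF this] c1
  show "measure_pmf.prob (warner_B1 U p B1 S) Out \<le> exp (ln (p / (1 - p))) * measure_pmf.prob (warner_B1 U p B1 S') Out + 0"
    unfolding W ec by simp
qed

end
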